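(* Let $\alpha,\beta<\omega^\omega$ and $m\in\mathbb{N}$. If $\alpha\le\beta$ and $\mathrm{MC}(\alpha)<m$, then $\alpha[m]\le\beta[m]$.
   Context: Ordinals $\alpha<\omega^\omega$ are written in Cantor normal form $\alpha=\omega^{n_0}+\dots+\omega^{n_{k-1}}$ with $n_0\ge\dots\ge n_{k-1}$, ordered as usual for ordinals. Writing $\alpha=\omega^{n}\cdot k_n+\dots+\omega^0\cdot k_0$ (with $\omega^j\cdot k$ the sum of $k$ copies of $\omega^j$), $\mathrm{MC}(\alpha)=\max\{k_n,\dots,k_0\}$. For $m\in\mathbb{N}$: $0[m]=0$, $(\beta+1)[m]=\beta$, and $(\beta+\omega^{n})[m]=\beta+\omega^{n-1}\cdot m$ for $n\ge1$ (with $\beta+\omega^n$ in Cantor normal form). *)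

theory Defs
  imports Main
begin

text \<open>Ordinals below omega^omega, represented by their Cantor normal form:
  the list [n_0, ..., n_(k-1)] stands for omega^n_0 + ... + omega^n_(k-1),
  required to be non-increasing.\<close>

type_synonym cnf_ord = "nat list"

definition is_cnf :: "cnf_ord \<Rightarrow> bool" where
  "is_cnf xs \<longleftrightarrow> sorted_wrt (\<ge>) xs"

fun ord_less :: "cnf_ord \<Rightarrow> cnf_ord \<Rightarrow> bool" where
  "ord_less [] [] = False"
| "ord_less [] (b # bs) = True"
| "ord_less (a # as) [] = False"
| "ord_less (a # as) (b # bs) = (a < b \<or> (a = b \<and> ord_less as bs))"

definition ord_le :: "cnf_ord \<Rightarrow> cnf_ord \<Rightarrow> bool" where
  "ord_le xs ys \<longleftrightarrow> ord_less xs ys \<or> xs = ys"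

text \<open>MC: the maximal coefficient k_j in omega^n*k_n + ... + omega^0*k_0
  (the coefficient of omega^j is the number of occurrences of j).\<close>
definition MC :: "cnf_ord \<Rightarrow> nat" where
  "MC xs = Max (insert 0 ((\<lambda>j. count_list xs j) ` set xs))"

text \<open>Fundamental sequence: 0[m]=0, (beta+1)[m]=beta,
  (beta+omega^(n+1))[m] = beta + omega^n * m.\<close>
definition fs :: "cnf_ord \<Rightarrow> nat \<Rightarrow> cnf_ord" where
  "fs xs m = (if xs = [] then []
              else (case last xs of
                      0 \<Rightarrow> butlast xs
                    | Suc n \<Rightarrow> butlast xs @ replicate m n))"

end

theory Submission
  imports Defs
begin

lemma ol_nil_right[simp]: "\<not> ord_less xs []"
  by (cases xs) auto

lemma ol_prefix: "ord_le xs (xs @ ys)"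
  unfolding ord_le_def
proof (induction xs)
  case Nil then show ?case by (cases ys) auto
next
  case (Cons a xs) then show ?case by auto
qed

lemma ol_append: "ord_less (p @ xs) (p @ ys) = ord_less xs ys"
  by (induction p) auto

lemma ol_le_append: "ord_le (p @ xs) (p @ ys) = ord_le xs ys"
  by (simp add: ord_le_def ol_append)

lemma ol_trans: "ord_less xs ys \<Longrightarrow> ord_less ys zs \<Longrightarrow> ord_less xs zs"
proof (induction xs arbitrary: ys zs)
  case Nil then show ?case by (cases zs) auto
next
  case (Cons a xs)
  then obtain b bs where ys: "ys = b # bs" by (cases ys) auto
  with Cons obtain c cs where zs: "zs = c # cs" by (cases zs) auto
  show ?case using Cons ys zs by auto
qed

lemma ole_trans: "ord_le xs ys \<Longrightarrow> ord_le ys zs \<Longrightarrow> ord_le xs zs"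
  unfolding ord_le_def using ol_trans by blast

lemma fs_le: "ord_le (fs xs m) xs"
proof (cases xs rule: rev_exhaust)
  case Nil then show ?thesis by (simp add: fs_def ord_le_def)
next
  case (snoc ys n)
  show ?thesis
  proof (cases n)
    case 0 then show ?thesis using snoc ol_prefix by (simp add: fs_def)
  next
    case (Suc k)
    have "ord_le (replicate m k) [Suc k]" by (cases m) (auto simp: ord_le_def)
    then show ?thesis using snoc Suc ol_le_append by (simp add: fs_def)
  qed
qed

lemma dichot: "ord_less \<alpha> (q @ [c]) \<Longrightarrow> ord_le \<alpha> q \<or> (\<exists>a as. \<alpha> = q @ a # as \<and> a < c)"
proof (induction q arbitrary: \<alpha>)
  case Nil then show ?case by (cases \<alpha>) (auto simp: ord_le_def)
next
  case (Cons x q)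
  show ?case
  proof (cases \<alpha>)
    case Nil then show ?thesis by (simp add: ord_le_def)
  next
    case (Cons a as)
    show ?thesis
    proof (cases "a < x")
      case True then show ?thesis using Cons by (simp add: ord_le_def)
    next
      case False
      with Cons \<open>ord_less \<alpha> ((x # q) @ [c])\<close> have "a = x" "ord_less as (q @ [c])" by auto
      with Cons.IH[of as] Cons show ?thesis by (auto simp: ord_le_def)
    qed
  qed
qed

lemma less_rep: "\<forall>x\<in>set xs. x \<le> c \<Longrightarrow> count_list xs c < m \<Longrightarrow> ord_less xs (replicate m c)"
proof (induction xs arbitrary: m)
  case Nil then show ?case by (cases m) auto
next
  case (Cons x xs)
  then obtain m' where m: "m = Suc m'" by (cases m) auto
  show ?case
  proof (cases "x = c")
    case True then show ?thesis using Cons m by auto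
  next
    case False then show ?thesis using Cons m by auto
  qed
qed

lemma count_MC: "count_list xs x \<le> MC xs"
proof (cases "x \<in> set xs")
  case True then show ?thesis unfolding MC_def by (intro Max_ge) auto
next
  case False then show ?thesis by (simp add: count_list_0_iff)
qed

theorem lemma1p2:
  fixes \<alpha> \<beta> :: cnf_ord and m :: nat
  assumes "is_cnf \<alpha>" and "is_cnf \<beta>"
    and "ord_le \<alpha> \<beta>" and "MC \<alpha> < m"
  shows "ord_le (fs \<alpha> m) (fs \<beta> m)"
proof (cases "\<alpha> = \<beta>")
  case True then show ?thesis by (simp add: ord_le_def)
next
  case False
  then have lt: "ord_less \<alpha> \<beta>" using assms(3) by (simp add: ord_le_def)
  then have "\<beta> \<noteq> []" by auto
  then obtain q c where b: "\<beta> = q @ [c]" by (cases \<beta> rule: rev_exhaust) auto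
  have fsb: "fs \<beta> m = q @ (case c of 0 \<Rightarrow> [] | Suc n \<Rightarrow> replicate m n)"
    using b by (simp add: fs_def split: nat.split)
  from dichot[OF lt[unfolded b]] show ?thesis
  proof
    assume "ord_le \<alpha> q"
    moreover have "ord_le q (fs \<beta> m)" using fsb ol_prefix by simp
    ultimately show ?thesis using fs_le ole_trans by blast
  next
    assume "\<exists>a as. \<alpha> = q @ a # as \<and> a < c"
    then obtain a as where a: "\<alpha> = q @ a # as" "a < c" by blast
    then obtain c' where c: "c = Suc c'" by (cases c) auto
    have fsa: "fs \<alpha> m = q @ fs (a # as) m" using a by (simp add: fs_def butlast_append split: nat.split)
    have "sorted_wrt (\<ge>) (a # as)" using assms(1) a unfolding is_cnf_def
      by (simp add: sorted_wrt_append)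
    then have all: "\<forall>x\<in>set (a # as). x \<le> c'" using a c by auto
    have "count_list (a # as) c' \<le> count_list \<alpha> c'" using a by simp
    also have "\<dots> \<le> MC \<alpha>" by (rule count_MC)
    finally have "count_list (a # as) c' < m" using assms(4) by simp
    from less_rep[OF all this] have "ord_le (a # as) (replicate m c')" by (simp add: ord_le_def)
    with fs_le have "ord_le (fs (a # as) m) (replicate m c')" using ole_trans by blast
    then show ?thesis using fsa fsb c ol_le_append by simp
  qed
qed

end
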